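(* Let $A\in\mathbb{R}^{n\times d}$ be fixed with all rows of Euclidean norm at most $2$, let $c,c'\in\mathbb{R}^d$ be fixed, and let $I\in\binom{[n]}{d}$ with $A_I$ invertible. If $Z\in\mathbb{R}^d$ has a $1$-log-Lipschitz probability density function, then for $m=\ln(1/0.99)/(2d)$, \[ \Pr\big[I\in M(A,c+Z,c'+Z,m)\big]\ge 0.99\Pr\big[I\in M(A,c+Z,c'+Z,0)\big]. \]
   Context: $M(A,y,y',m)$ is the set of bases $I\in\binom{[n]}{d}$ such that there exists $w\in[y,y']$ with $w^\top A_I^{-1}\ge m$ componentwise. A density $\mu$ is $1$-log-Lipschitz if $|\log\mu(x)-\log\mu(y)|\le\|x-y\|$ for all $x,y$. *)

theory Defs
  imports "HOL-Probability.Probability"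
begin

text \<open>A matrix A in R^(n x d) is represented as real^'d^'n (rows A $ i, i :: 'n).
  For a set I of row indices with card I = d, A_I is the d x d submatrix formed by
  the rows in I, listed via a fixed enumeration of I (the componentwise condition
  below does not depend on the enumeration).\<close>

definition sub_rows :: "real^'d^'n \<Rightarrow> 'n set \<Rightarrow> real^'d^'d" where
  "sub_rows A I = (\<chi> k. A $ ((SOME e. bij_betw e (UNIV::'d set) I) k))"

definition bases_M :: "real^'d^'n \<Rightarrow> real^'d \<Rightarrow> real^'d \<Rightarrow> real \<Rightarrow> 'n set set" where
  "bases_M A y y' m = {I. card I = CARD('d) \<and> invertible (sub_rows A I) \<and>
      (\<exists>w \<in> closed_segment y y'. \<forall>k. (w v* matrix_inv (sub_rows A I)) $ k \<ge> m)}"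

definition log_lipschitz1 :: "('a::metric_space \<Rightarrow> real) \<Rightarrow> bool" where
  "log_lipschitz1 \<mu> \<longleftrightarrow> (\<forall>x. \<mu> x > 0) \<and> (\<forall>x y. \<bar>ln (\<mu> x) - ln (\<mu> y)\<bar> \<le> dist x y)"

end

theory Submission imports Defs begin

lemma C_closed: "closed {w::real^'d. \<forall>k. r \<le> (w v* M) $ k}"
proof -
  have "{w::real^'d. \<forall>k. r \<le> (w v* M) $ k} = {w. \<forall>k. r \<le> (transpose M *v w) $ k}" by simp
  also have "closed \<dots>"
    by (intro closed_Collect_all closed_Collect_le continuous_intros)
  finally show ?thesis .
qed

lemma E_closed:
  fixes A :: "real^'d^'n::finite"
  shows "closed {z. I \<in> bases_M A (c + z) (c' + z) r}"
proof (cases "card I = CARD('d) \<and> invertible (sub_rows A I)")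
  case False
  then have "{z. I \<in> bases_M A (c + z) (c' + z) r} = {}" by (auto simp: bases_M_def)
  then show ?thesis by simp
next
  case True
  let ?C = "{w::real^'d. \<forall>k. r \<le> (w v* matrix_inv (sub_rows A I)) $ k}"
  have "{z. I \<in> bases_M A (c + z) (c' + z) r} = (\<Union>w\<in>?C. \<Union>x\<in>closed_segment c c'. {w - x})"
  proof (intro set_eqI iffI)
    fix z assume "z \<in> {z. I \<in> bases_M A (c + z) (c' + z) r}"
    then obtain w where w: "w \<in> closed_segment (z + c) (z + c')" "w \<in> ?C"
      using True by (auto simp: bases_M_def add.commute)
    then obtain x where "x \<in> closed_segment c c'" "w = z + x"
      unfolding closed_segment_translation by auto
    then show "z \<in> (\<Union>w\<in>?C. \<Union>x\<in>closed_segment c c'. {w - x})"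
      using w by force
  next
    fix z assume "z \<in> (\<Union>w\<in>?C. \<Union>x\<in>closed_segment c c'. {w - x})"
    then obtain w x where wx: "w \<in> ?C" "x \<in> closed_segment c c'" "z = w - x" by auto
    then have "w \<in> closed_segment (z + c) (z + c')"
      unfolding closed_segment_translation by auto
    then show "z \<in> {z. I \<in> bases_M A (c + z) (c' + z) r}"
      using True wx by (auto simp: bases_M_def add.commute)
  qed
  also have "closed \<dots>"
    by (intro closed_compact_differences C_closed compact_segment)
  finally show ?thesis .
qed

lemma shift_in:
  fixes A :: "real^'d^'n::finite"
  assumes "I \<in> bases_M A (c + z) (c' + z) 0"
  shows "I \<in> bases_M A (c + (z + m *\<^sub>R ((\<chi> i. 1) v* sub_rows A I))) (c' + (z + m *\<^sub>R ((\<chi> i. 1) v* sub_rows A I))) m"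
proof -
  let ?B = "sub_rows A I" let ?s = "(\<chi> i. (1::real)) v* ?B"
  obtain w where w: "w \<in> closed_segment (c + z) (c' + z)" "\<forall>k. 0 \<le> (w v* matrix_inv ?B) $ k"
    and ci: "card I = CARD('d)" "invertible ?B"
    using assms by (auto simp: bases_M_def)
  have "?B ** matrix_inv ?B = mat 1"
    using ci(2) unfolding invertible_def matrix_inv_def by (rule someI_ex[THEN conjunct1])
  then have s1: "?s v* matrix_inv ?B = (\<chi> i. 1)"
    by (simp add: vector_matrix_mul_assoc)
  have "w + m *\<^sub>R ?s \<in> closed_segment (m *\<^sub>R ?s + (c + z)) (m *\<^sub>R ?s + (c' + z))"
    unfolding closed_segment_translation using w(1) by (auto simp: add.commute)
  moreover have "(w + m *\<^sub>R ?s) v* matrix_inv ?B = w v* matrix_inv ?B + m *\<^sub>R (\<chi> i. 1)"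
    using s1 by (simp add: vector_matrix_left_distrib scaleR_vector_matrix_assoc)
  ultimately have "w + m *\<^sub>R ?s \<in> closed_segment (c + (z + m *\<^sub>R ?s)) (c' + (z + m *\<^sub>R ?s))"
    and "\<forall>k. m \<le> ((w + m *\<^sub>R ?s) v* matrix_inv ?B) $ k"
    using w(2) by (auto simp: algebra_simps)
  then show ?thesis using ci unfolding bases_M_def by blast
qed
lemma s_norm:
  fixes A :: "real^'d^'n::finite"
  assumes rows: "\<forall>i. norm (A $ i) \<le> 2"
  shows "norm ((\<chi> i. (1::real)) v* sub_rows A I) \<le> 2 * real CARD('d)"
proof -
  have eq: "(\<chi> i. (1::real)) v* sub_rows A I = (\<Sum>i\<in>UNIV. sub_rows A I $ i)"
    by (simp add: vector_matrix_mult_def vec_eq_iff sum_component)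
  have "norm (\<Sum>i\<in>UNIV. sub_rows A I $ i) \<le> (\<Sum>i\<in>(UNIV::'d set). norm (sub_rows A I $ i))"
    by (rule norm_sum)
  also have "\<dots> \<le> (\<Sum>i\<in>(UNIV::'d set). 2)"
    by (intro sum_mono) (simp add: sub_rows_def rows)
  finally show ?thesis using eq by (simp add: mult.commute)
qed

theorem corollary4p6:
  fixes A :: "real^'d^'n::finite"
    and c c' :: "real^'d"
    and I :: "'n set"
    and P :: "'w measure"
    and Z :: "'w \<Rightarrow> real^'d"
    and \<mu> :: "real^'d \<Rightarrow> real"
  assumes rows: "\<forall>i. norm (A $ i) \<le> 2"
    and card_I: "card I = CARD('d)"
    and inv_I: "invertible (sub_rows A I)"
    and P: "prob_space P"
    and Zdist: "distributed P lborel Z (\<lambda>x. ennreal (\<mu> x))"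
    and loglip: "log_lipschitz1 \<mu>"
  shows "measure P {\<omega> \<in> space P. I \<in> bases_M A (c + Z \<omega>) (c' + Z \<omega>) (ln (1 / 0.99) / (2 * real CARD('d)))}
         \<ge> 0.99 * measure P {\<omega> \<in> space P. I \<in> bases_M A (c + Z \<omega>) (c' + Z \<omega>) 0}"
proof -
  interpret P: prob_space P by (rule P)
  define m where "m = ln (1 / 0.99) / (2 * real CARD('d))"
  define s where "s = (\<chi> i. (1::real)) v* sub_rows A I"
  define a where "a = m *\<^sub>R s"
  define E where "E r = {z. I \<in> bases_M A (c + z) (c' + z) r}" for r
  have Zm: "Z \<in> measurable P lborel" using Zdist by (rule distributed_measurable)
  have mum: "(\<lambda>x. ennreal (\<mu> x)) \<in> borel_measurable lborel"
    using Zdist by (rule distributed_borel_measurable)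
  have Esets: "E r \<in> sets lborel" for r
    unfolding E_def by (simp add: borel_closed E_closed)
  have ev: "emeasure P {\<omega> \<in> space P. I \<in> bases_M A (c + Z \<omega>) (c' + Z \<omega>) r}
      = (\<integral>\<^sup>+ x. ennreal (\<mu> x) * indicator (E r) x \<partial>lborel)" for r
  proof -
    have "{\<omega> \<in> space P. I \<in> bases_M A (c + Z \<omega>) (c' + Z \<omega>) r} = Z -` E r \<inter> space P"
      by (auto simp: E_def)
    also have "emeasure P \<dots> = emeasure (distr P lborel Z) (E r)"
      by (rule emeasure_distr[symmetric, OF Zm Esets])
    also have "\<dots> = emeasure (density lborel (\<lambda>x. ennreal (\<mu> x))) (E r)"
      by (simp add: distributed_distr_eq_density[OF Zdist])
    also have "\<dots> = (\<integral>\<^sup>+ x. ennreal (\<mu> x) * indicator (E r) x \<partial>lborel)"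
      by (rule emeasure_density[OF mum Esets])
    finally show ?thesis .
  qed
  have m0: "0 \<le> m" unfolding m_def by simp
  have na: "norm a \<le> ln (1 / 0.99)"
  proof -
    have "norm a = m * norm s" unfolding a_def using m0 by simp
    also have "\<dots> \<le> m * (2 * real CARD('d))"
      using s_norm[OF rows] m0 unfolding s_def by (intro mult_left_mono) auto
    also have "\<dots> = ln (1 / 0.99)" unfolding m_def by simp
    finally show ?thesis .
  qed
  have pt: "ennreal 0.99 * (ennreal (\<mu> x) * indicator (E 0) x)
      \<le> ennreal (\<mu> (a + x)) * indicator (E m) (a + x)" for x
  proof (cases "x \<in> E 0")
    case False then show ?thesis by simp
  next
    case True
    then have "a + x \<in> E m"
      using shift_in[of I A c x c' m] unfolding E_def a_def s_def by (simp add: add.commute)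
    moreover have "0.99 * \<mu> x \<le> \<mu> (a + x)"
    proof -
      have pos: "\<mu> x > 0" "\<mu> (a + x) > 0" using loglip by (auto simp: log_lipschitz1_def)
      have "\<bar>ln (\<mu> x) - ln (\<mu> (a + x))\<bar> \<le> dist x (a + x)"
        using loglip by (auto simp: log_lipschitz1_def)
      also have "dist x (a + x) = norm a" by (simp add: dist_norm)
      finally have "ln (\<mu> x) - ln (\<mu> (a + x)) \<le> ln (1 / 0.99)" using na by linarith
      moreover have "ln (1 / 0.99) = - ln (0.99::real)" by (simp add: ln_div)
      moreover have "ln (0.99 * \<mu> x) = ln 0.99 + ln (\<mu> x)"
        using pos by (intro ln_mult_pos) auto
      ultimately have "ln (0.99 * \<mu> x) \<le> ln (\<mu> (a + x))"
        by linarith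
      then show ?thesis using pos by (subst (asm) ln_le_cancel_iff) auto
    qed
    ultimately show ?thesis using True
      by (simp add: ennreal_mult'[symmetric] ennreal_leI)
  qed
  have "ennreal 0.99 * emeasure P {\<omega> \<in> space P. I \<in> bases_M A (c + Z \<omega>) (c' + Z \<omega>) 0}
      = (\<integral>\<^sup>+ x. ennreal 0.99 * (ennreal (\<mu> x) * indicator (E 0) x) \<partial>lborel)"
    unfolding ev using mum Esets by (subst nn_integral_cmult) auto
  also have "\<dots> \<le> (\<integral>\<^sup>+ x. ennreal (\<mu> (a + x)) * indicator (E m) (a + x) \<partial>lborel)"
    by (intro nn_integral_mono pt)
  also have "\<dots> = (\<integral>\<^sup>+ x. ennreal (\<mu> x) * indicator (E m) x \<partial>distr lborel borel ((+) a))"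
    using mum Esets by (subst nn_integral_distr) auto
  also have "\<dots> = emeasure P {\<omega> \<in> space P. I \<in> bases_M A (c + Z \<omega>) (c' + Z \<omega>) m}"
    unfolding ev lborel_distr_plus ..
  finally have "ennreal 0.99 * ennreal (measure P {\<omega> \<in> space P. I \<in> bases_M A (c + Z \<omega>) (c' + Z \<omega>) 0})
      \<le> ennreal (measure P {\<omega> \<in> space P. I \<in> bases_M A (c + Z \<omega>) (c' + Z \<omega>) m})"
    by (simp only: P.emeasure_eq_measure)
  then have "ennreal (0.99 * measure P {\<omega> \<in> space P. I \<in> bases_M A (c + Z \<omega>) (c' + Z \<omega>) 0})
      \<le> ennreal (measure P {\<omega> \<in> space P. I \<in> bases_M A (c + Z \<omega>) (c' + Z \<omega>) m})"
    by (subst ennreal_mult) auto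
  then show ?thesis unfolding m_def
    by (subst (asm) ennreal_le_iff) auto
qed
end
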